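(* Let $K^2$ be the Klein bottle and $\mathcal R(K^2)=\mathrm{Hom}(\pi_1(K^2),\mathrm{SL}_2(\mathbb C))$ its representation variety. If $\rho\in\mathcal R(K^2)$ is irreducible, then $\rho$ is a smooth point of $\mathcal R(K^2)$ and its Zariski tangent space has dimension 4. *)

theory Defs
  imports "HOL-Analysis.Analysis"
begin

text \<open>Points of the ambient affine space of pairs of 2x2 complex matrices
  (A, B) = (rho(a), rho(b)), where pi_1 of the Klein bottle is presented as
  < a, b | a b a b^-1 >.\<close>

type_synonym pt = "(complex^2^2) \<times> (complex^2^2)"

definition mscale :: "complex \<Rightarrow> complex^2^2 \<Rightarrow> complex^2^2" where
  "mscale c X = (\<chi> i j. c * X$i$j)"

definition pscale :: "complex \<Rightarrow> pt \<Rightarrow> pt" where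
  "pscale c p = (mscale c (fst p), mscale c (snd p))"

definition cdim :: "pt set \<Rightarrow> nat" where
  "cdim S = vector_space.dim pscale S"

definition csubspace :: "pt set \<Rightarrow> bool" where
  "csubspace W \<longleftrightarrow> subspace W \<and> (\<forall>c w. w \<in> W \<longrightarrow> pscale c w \<in> W)"

definition RepK2 :: "pt set" where
  "RepK2 = {(A, B). det A = 1 \<and> det B = 1 \<and> A ** B ** A = B}"

text \<open>The defining polynomial map; R(K^2) is its zero set (as a scheme,
  det A = 1, det B = 1, A B A B^-1 = I, equivalently A B A = B on SL_2).\<close>
definition FK2 :: "pt \<Rightarrow> complex \<times> complex \<times> (complex^2^2)" where
  "FK2 p = (det (fst p) - 1, det (snd p) - 1, fst p ** snd p ** fst p - snd p)"

definition zariski_tangent :: "pt \<Rightarrow> pt set" where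
  "zariski_tangent \<rho> = {v. frechet_derivative FK2 (at \<rho>) v = 0}"

definition irreducible_rep :: "pt \<Rightarrow> bool" where
  "irreducible_rep \<rho> \<longleftrightarrow>
     \<not> (\<exists>v::complex^2. v \<noteq> 0 \<and> (\<exists>l m. fst \<rho> *v v = l *s v \<and> snd \<rho> *v v = m *s v))"

text \<open>R is a d-dimensional complex (holomorphic) submanifold near x: a
  neighbourhood of x in R is the holomorphically immersed homeomorphic image of an
  open subset of a d-dimensional complex linear subspace.\<close>
definition complex_manifold_at :: "pt set \<Rightarrow> pt \<Rightarrow> nat \<Rightarrow> bool" where
  "complex_manifold_at R x d \<longleftrightarrow>
     (\<exists>W U V \<phi> \<psi>. csubspace W \<and> cdim W = d \<and> open U \<and> x \<in> U \<and>
        openin (top_of_set W) V \<and> homeomorphism V (R \<inter> U) \<phi> \<psi> \<and>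
        (\<forall>v\<in>V. \<exists>D. (\<phi> has_derivative D) (at v within W) \<and> inj_on D W \<and>
              (\<forall>c w. w \<in> W \<longrightarrow> D (pscale c w) = pscale c (D w))))"

definition smooth_point_K2 :: "pt \<Rightarrow> bool" where
  "smooth_point_K2 \<rho> \<longleftrightarrow> \<rho> \<in> RepK2 \<and>
     (\<exists>d. complex_manifold_at RepK2 \<rho> d \<and> cdim (zariski_tangent \<rho>) = d)"

end

theory Submission
  imports Defs
begin
definition mat2 :: "complex \<Rightarrow> complex \<Rightarrow> complex \<Rightarrow> complex \<Rightarrow> complex^2^2" where
  "mat2 a b c d = (\<chi> i j. if i = 1 then (if j = 1 then a else b) else (if j = 1 then c else d))"

lemma mat2_nth[simp]:
  "mat2 a b c d $ 1 $ 1 = a" "mat2 a b c d $ 1 $ 2 = b"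
  "mat2 a b c d $ 2 $ 1 = c" "mat2 a b c d $ 2 $ 2 = d"
  by (simp_all add: mat2_def)

lemma mat_eq2: "(M::'a^2^2) = N \<longleftrightarrow> M$1$1 = N$1$1 \<and> M$1$2 = N$1$2 \<and> M$2$1 = N$2$1 \<and> M$2$2 = N$2$2"
  by (auto simp add: vec_eq_iff forall_2)

lemma mmul_nth[simp]: "((X::'a::semiring_1^2^2) ** Y) $ i $ j = X$i$1 * Y$1$j + X$i$2 * Y$2$j"
  by (simp add: matrix_matrix_mult_def sum_2)

lemma mat1_nth[simp]: "(mat 1 :: 'a::zero_neq_one^2^2) $ 1 $ 1 = 1" "(mat 1 :: 'a::zero_neq_one^2^2) $ 2 $ 2 = 1"
  "(mat 1 :: 'a::zero_neq_one^2^2) $ 1 $ 2 = 0" "(mat 1 :: 'a::zero_neq_one^2^2) $ 2 $ 1 = 0"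
  by (simp_all add: mat_def)

lemma mscale_nth[simp]: "mscale c X $ i $ j = c * X $ i $ j"
  by (simp add: mscale_def)

lemma pscale_simps[simp]: "fst (pscale c p) = mscale c (fst p)" "snd (pscale c p) = mscale c (snd p)"
  by (simp_all add: pscale_def)

interpretation pv: vector_space pscale
  apply unfold_locales
  by (auto simp: pscale_def mat_eq2 algebra_simps)

lemma lsum:
  fixes l :: "pt \<Rightarrow> complex"
  assumes "\<And>x y. l (x + y) = l x + l y"
  shows "l (\<Sum>j\<in>F. g j) = (\<Sum>j\<in>F. l (g j))"
proof -
  have l0: "l 0 = 0" using assms[of 0 0] by simp
  show ?thesis
  proof (induction F rule: infinite_finite_induct)
    case (infinite A) then show ?case by (simp add: l0)
  next
    case empty then show ?case by (simp add: l0)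
  next
    case (insert x F) then show ?case by (simp add: assms)
  qed
qed

lemma cdim_gen:
  fixes v :: "nat \<Rightarrow> pt" and l :: "nat \<Rightarrow> pt \<Rightarrow> complex" and S :: "pt set"
  assumes ladd: "\<And>i x y. i < n \<Longrightarrow> l i (x + y) = l i x + l i y"
    and lscale: "\<And>i c x. i < n \<Longrightarrow> l i (pscale c x) = c * l i x"
    and delta: "\<And>i j. i < n \<Longrightarrow> j < n \<Longrightarrow> l i (v j) = (if i = j then 1 else 0)"
    and mem: "\<And>j. j < n \<Longrightarrow> v j \<in> S"
    and rep: "\<And>x. x \<in> S \<Longrightarrow> x = (\<Sum>j<n. pscale (l j x) (v j))"
  shows "cdim S = n"
proof -
  have inj: "inj_on v {..<n}"
  proof (rule inj_onI)
    fix i j assume "i \<in> {..<n}" "j \<in> {..<n}" "v i = v j"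
    then have "l i (v i) = l i (v j)" by simp
    with \<open>i \<in> {..<n}\<close> \<open>j \<in> {..<n}\<close> show "i = j" using delta by (auto split: if_splits)
  qed
  let ?B = "v ` {..<n}"
  have card: "card ?B = n" using inj by (simp add: card_image)
  have sub: "?B \<subseteq> S" using mem by auto
  have spn: "S \<subseteq> pv.span ?B"
  proof
    fix x assume "x \<in> S"
    then have "x = (\<Sum>j<n. pscale (l j x) (v j))" by (rule rep)
    also have "\<dots> \<in> pv.span ?B"
      by (intro pv.span_sum pv.span_scale pv.span_base) auto
    finally show "x \<in> pv.span ?B" .
  qed
  have ind: "pv.independent ?B"
  proof (rule pv.independent_if_scalars_zero)
    show "finite ?B" by simp
  next
    fix f x assume s: "(\<Sum>x\<in>?B. pscale (f x) x) = 0" and x: "x \<in> ?B"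
    then obtain i where i: "i < n" "x = v i" by auto
    have "(\<Sum>j<n. pscale (f (v j)) (v j)) = 0"
      using s by (simp add: sum.reindex[OF inj])
    then have "l i (\<Sum>j<n. pscale (f (v j)) (v j)) = l i 0" by simp
    moreover have "l i 0 = 0" using ladd[of i 0 0] i(1) by simp
    moreover have "l i (\<Sum>j<n. pscale (f (v j)) (v j)) = (\<Sum>j<n. f (v j) * (if i = j then 1 else 0))"
      apply (subst lsum[where l="l i", OF ladd[OF i(1)]])
      apply (rule sum.cong[OF refl])
      proof -
        fix x assume "x \<in> {..<n}"
        then have "x < n" by simp
        then show "l i (pscale (f (v x)) (v x)) = f (v x) * (if i = x then 1 else 0)"
          using i(1) lscale[of i] delta[of i x] by simp
      qed
    moreover have "(\<Sum>j<n. f (v j) * (if i = j then 1 else (0::complex))) = f (v i)"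
    proof -
      have "(\<Sum>j<n. f (v j) * (if i = j then 1 else (0::complex))) = (\<Sum>j<n. if i = j then f (v j) else 0)"
        by (rule sum.cong) auto
      also have "\<dots> = f (v i)" using i by (simp add: sum.delta)
      finally show ?thesis .
    qed
    ultimately show "f x = 0" using i by simp
  qed
  have "card ?B = pv.dim S" by (rule pv.basis_card_eq_dim[OF sub spn ind])
  then show ?thesis using card by (simp add: cdim_def)
qed


lemma mat2_eta: "M = mat2 (M$1$1) (M$1$2) (M$2$1) (M$2$2)"
  by (simp add: mat_eq2)

lemma bl_mat2: "bounded_linear (\<lambda>(a::complex,b::complex,c::complex,d::complex). mat2 a b c d)"
proof -
  have "linear (\<lambda>(a::complex,b::complex,c::complex,d::complex). mat2 a b c d)"
    by (rule linearI) (auto simp: mat_eq2)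
  then show ?thesis by (simp add: linear_conv_bounded_linear)
qed

lemma has_derivative_mat2[derivative_intros]:
  assumes "(f1 has_derivative f1') (at x within s)" "(f2 has_derivative f2') (at x within s)" "(f3 has_derivative f3') (at x within s)" "(f4 has_derivative f4') (at x within s)"
  shows "((\<lambda>x. mat2 (f1 x) (f2 x) (f3 x) (f4 x)) has_derivative (\<lambda>h. mat2 (f1' h) (f2' h) (f3' h) (f4' h))) (at x within s)"
  using bounded_linear.has_derivative[OF bl_mat2, OF has_derivative_Pair[OF assms(1) has_derivative_Pair[OF assms(2) has_derivative_Pair[OF assms(3) assms(4)]]]]
  by simp

lemma continuous_on_mat2[continuous_intros]:
  assumes "continuous_on S f1" "continuous_on S f2" "continuous_on S f3" "continuous_on S f4"
  shows "continuous_on S (\<lambda>x. mat2 (f1 x) (f2 x) (f3 x) (f4 x))"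
  using bounded_linear.continuous_on[OF bl_mat2, OF continuous_on_Pair[OF assms(1) continuous_on_Pair[OF assms(2) continuous_on_Pair[OF assms(3) assms(4)]]]]
  by simp

lemma bl_nth2: "bounded_linear (\<lambda>M::complex^2^2. M $ i $ j)"
proof -
  show ?thesis
    by (rule bounded_linear_compose[OF bounded_linear_vec_nth bounded_linear_vec_nth])
qed

lemma has_derivative_nth2[derivative_intros]:
  "(f has_derivative f') F \<Longrightarrow> ((\<lambda>x. (f x::complex^2^2) $ i $ j) has_derivative (\<lambda>h. f' h $ i $ j)) F"
  using bounded_linear.has_derivative[OF bl_nth2] by blast

lemma continuous_on_nth2[continuous_intros]:
  "continuous_on S f \<Longrightarrow> continuous_on S (\<lambda>x. (f x::complex^2^2) $ i $ j)"
  using bounded_linear.continuous_on[OF bl_nth2] by blast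

lemma has_derivative_entries:
  fixes f :: "'a::real_normed_vector \<Rightarrow> complex^2^2"
  assumes "\<And>i j. ((\<lambda>x. f x $ i $ j) has_derivative (\<lambda>h. f' h $ i $ j)) (at y within s)"
  shows "(f has_derivative f') (at y within s)"
proof -
  have e1: "f = (\<lambda>x. mat2 (f x$1$1) (f x$1$2) (f x$2$1) (f x$2$2))" by (rule ext, rule mat2_eta)
  have e2: "f' = (\<lambda>x. mat2 (f' x$1$1) (f' x$1$2) (f' x$2$1) (f' x$2$2))" by (rule ext, rule mat2_eta)
  show ?thesis by (subst e1, subst e2, intro has_derivative_mat2 assms)
qed

definition dd :: "complex^2^2 \<Rightarrow> complex^2^2 \<Rightarrow> complex" where
  "dd X x = X$1$1 * x$2$2 + x$1$1 * X$2$2 - X$1$2 * x$2$1 - x$1$2 * X$2$1"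

definition DF :: "pt \<Rightarrow> pt \<Rightarrow> complex \<times> complex \<times> (complex^2^2)" where
  "DF r v = (dd (fst r) (fst v), dd (snd r) (snd v),
     fst v ** snd r ** fst r + fst r ** snd v ** fst r + fst r ** snd r ** fst v - snd v)"

lemma has_derivative_det_fst:
  "((\<lambda>p::pt. det (fst p) - 1) has_derivative (\<lambda>h. dd (fst x) (fst h))) (at x)"
  unfolding det_2
  by (rule has_derivative_eq_rhs, (rule derivative_intros)+) (auto simp: dd_def algebra_simps)

lemma has_derivative_det_snd:
  "((\<lambda>p::pt. det (snd p) - 1) has_derivative (\<lambda>h. dd (snd x) (snd h))) (at x)"
  unfolding det_2
  by (rule has_derivative_eq_rhs, (rule derivative_intros)+) (auto simp: dd_def algebra_simps)

lemma has_derivative_prod3: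
  "((\<lambda>p::pt. fst p ** snd p ** fst p - snd p) has_derivative
     (\<lambda>v. fst v ** snd r ** fst r + fst r ** snd v ** fst r + fst r ** snd r ** fst v - snd v)) (at r)"
  apply (rule has_derivative_entries)
  apply (simp only: vector_minus_component vector_add_component mmul_nth)
  apply (rule has_derivative_eq_rhs, (rule derivative_intros)+)
  apply (auto simp: algebra_simps)
  done

lemma FK2_deriv: "(FK2 has_derivative DF r) (at r)"
  unfolding FK2_def DF_def
  by (intro has_derivative_Pair has_derivative_det_fst has_derivative_det_snd has_derivative_prod3)

lemma zariski_eq: "zariski_tangent r = {v. DF r v = 0}"
  unfolding zariski_tangent_def using frechet_derivative_at[OF FK2_deriv] by simp

lemma eig2:
  fixes m11 m12 m21 m22 :: complex
  shows "\<exists>l v1 v2. (v1 \<noteq> 0 \<or> v2 \<noteq> 0) \<and> m11* v1 + m12* v2 = l* v1 \<and> m21* v1 + m22* v2 = l* v2"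
proof (cases "m12 = 0")
  case True
  then show ?thesis by (intro exI[of _ m22] exI[of _ 0] exI[of _ 1]) simp
next
  case False
  define t where "t = m11 + m22"
  define l where "l = (t + csqrt (t^2 - 4*(m11*m22 - m12*m21)))/2"
  have s: "(csqrt (t^2 - 4*(m11*m22 - m12*m21)))^2 = t^2 - 4*(m11*m22 - m12*m21)" by simp
  have ch: "l^2 - t*l + (m11*m22 - m12*m21) = 0"
    unfolding l_def using s by (simp add: power2_eq_square field_simps) algebra
  show ?thesis
    apply (rule exI[of _ l], rule exI[of _ m12], rule exI[of _ "l - m11"])
    using False ch unfolding t_def by (auto simp: algebra_simps power2_eq_square)
qed


lemma nf_scalar:
  fixes a11 a12 a21 a22 b11 b12 b21 b22 :: complex
  assumes dA: "a11*a22 - a12*a21 = 1" and dB: "b11*b22 - b12*b21 = 1"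
    and r11: "(a11*b11 + a12*b21)*a11 + (a11*b12 + a12*b22)*a21 = b11"
    and r12: "(a11*b11 + a12*b21)*a12 + (a11*b12 + a12*b22)*a22 = b12"
    and r21: "(a21*b11 + a22*b21)*a11 + (a21*b12 + a22*b22)*a21 = b21"
    and r22: "(a21*b11 + a22*b21)*a12 + (a21*b12 + a22*b22)*a22 = b22"
    and irr: "\<And>v1 v2 l m. v1 \<noteq> 0 \<or> v2 \<noteq> 0 \<Longrightarrow>
        \<not> (a11* v1 + a12* v2 = l* v1 \<and> a21* v1 + a22* v2 = l* v2 \<and> b11* v1 + b12* v2 = m* v1 \<and> b21* v1 + b22* v2 = m* v2)"
  shows "\<exists>v1 v2 w1 w2 l. v1*w2 - w1* v2 \<noteq> 0 \<and> l \<noteq> 0 \<and> l*l \<noteq> 1 \<and>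
     a11* v1 + a12* v2 = l* v1 \<and> a21* v1 + a22* v2 = l* v2 \<and>
     l*(a11*w1 + a12*w2) = w1 \<and> l*(a21*w1 + a22*w2) = w2 \<and>
     b11* v1 + b12* v2 = w1 \<and> b21* v1 + b22* v2 = w2 \<and>
     b11*w1 + b12*w2 = -v1 \<and> b21*w1 + b22*w2 = -v2"
proof -
  obtain l v1 v2 where vnz: "v1 \<noteq> 0 \<or> v2 \<noteq> 0" and e1: "a11* v1 + a12* v2 = l* v1" and e2: "a21* v1 + a22* v2 = l* v2"
    using eig2[of a11 a12 a21 a22] by blast
  have lnz: "l \<noteq> 0"
  proof
    assume "l = 0"
    then have "v1 = a22*(a11* v1 + a12* v2) - a12*(a21* v1 + a22* v2)" "v2 = a11*(a21* v1 + a22* v2) - a21*(a11* v1 + a12* v2)"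
      using e1 e2 dA by (simp_all, algebra, algebra)
    then show False using vnz \<open>l = 0\<close> e1 e2 by simp
  qed
  define w1 where "w1 = b11* v1 + b12* v2"
  define w2 where "w2 = b21* v1 + b22* v2"
  have f1: "l*(a11*w1 + a12*w2) = w1"
    unfolding w1_def w2_def using e1 e2 r11 r12 r21 r22 by algebra
  have f2: "l*(a21*w1 + a22*w2) = w2"
    unfolding w1_def w2_def using e1 e2 r11 r12 r21 r22 by algebra
  have D: "v1*w2 - w1* v2 \<noteq> 0"
  proof
    assume D0: "v1*w2 - w1* v2 = 0"
    show False
    proof (cases "v1 = 0")
      case False
      have "b11* v1 + b12* v2 = (w1/v1)* v1" "b21* v1 + b22* v2 = (w1/v1)* v2"
        using False D0 unfolding w1_def[symmetric] w2_def[symmetric] by (simp_all add: field_simps)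
      then show False using irr[OF vnz] e1 e2 by blast
    next
      case True
      then have "v2 \<noteq> 0" using vnz by simp
      have "b11* v1 + b12* v2 = (w2/v2)* v1" "b21* v1 + b22* v2 = (w2/v2)* v2"
        using True \<open>v2 \<noteq> 0\<close> D0 unfolding w1_def[symmetric] w2_def[symmetric] by (simp_all add: field_simps)
      then show False using irr[OF vnz] e1 e2 by blast
    qed
  qed
  have ll: "l*l \<noteq> 1"
  proof
    assume l1: "l*l = 1"
    have g1: "a11*w1 + a12*w2 = l*w1"
    proof -
      have "a11*w1 + a12*w2 = (l*l)*(a11*w1 + a12*w2)" using l1 by simp
      also have "\<dots> = l*w1" using f1 by (simp add: mult.assoc)
      finally show ?thesis .
    qed
    have g2: "a21*w1 + a22*w2 = l*w2"
    proof -
      have "a21*w1 + a22*w2 = (l*l)*(a21*w1 + a22*w2)" using l1 by simp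
      also have "\<dots> = l*w2" using f2 by (simp add: mult.assoc)
      finally show ?thesis .
    qed
    have "(a11 - l)*(v1*w2 - w1* v2) = 0" using e1 e2 g1 g2 by algebra
    moreover have "a12*(v1*w2 - w1* v2) = 0" using e1 e2 g1 g2 by algebra
    moreover have "a21*(v1*w2 - w1* v2) = 0" using e1 e2 g1 g2 by algebra
    moreover have "(a22 - l)*(v1*w2 - w1* v2) = 0" using e1 e2 g1 g2 by algebra
    ultimately have A: "a11 = l" "a12 = 0" "a21 = 0" "a22 = l" using D by auto
    obtain m u1 u2 where unz: "u1 \<noteq> 0 \<or> u2 \<noteq> 0" and "b11*u1 + b12*u2 = m*u1" "b21*u1 + b22*u2 = m*u2"
      using eig2[of b11 b12 b21 b22] by blast
    then show False using irr[OF unz, of l m] A by simp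
  qed
  define z1 where "z1 = b11*w1 + b12*w2"
  define z2 where "z2 = b21*w1 + b22*w2"
  define t where "t = b11 + b22"
  have ch1: "z1 = t*w1 - v1"
    unfolding z1_def z2_def t_def w1_def w2_def using dB by algebra
  have ch2: "z2 = t*w2 - v2"
    unfolding z1_def z2_def t_def w1_def w2_def using dB by algebra
  have aba1: "a11*(b11*(a11*y1+a12*y2) + b12*(a21*y1+a22*y2)) + a12*(b21*(a11*y1+a12*y2) + b22*(a21*y1+a22*y2)) = b11*y1 + b12*y2" for y1 y2
  proof -
    have "a11*(b11*(a11*y1+a12*y2) + b12*(a21*y1+a22*y2)) + a12*(b21*(a11*y1+a12*y2) + b22*(a21*y1+a22*y2))
      = ((a11*b11 + a12*b21)*a11 + (a11*b12 + a12*b22)*a21)*y1 + ((a11*b11 + a12*b21)*a12 + (a11*b12 + a12*b22)*a22)*y2"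
      by (simp add: algebra_simps)
    then show ?thesis using r11 r12 by simp
  qed
  have aba2: "a21*(b11*(a11*y1+a12*y2) + b12*(a21*y1+a22*y2)) + a22*(b21*(a11*y1+a12*y2) + b22*(a21*y1+a22*y2)) = b21*y1 + b22*y2" for y1 y2
  proof -
    have "a21*(b11*(a11*y1+a12*y2) + b12*(a21*y1+a22*y2)) + a22*(b21*(a11*y1+a12*y2) + b22*(a21*y1+a22*y2))
      = ((a21*b11 + a22*b21)*a11 + (a21*b12 + a22*b22)*a21)*y1 + ((a21*b11 + a22*b21)*a12 + (a21*b12 + a22*b22)*a22)*y2"
      by (simp add: algebra_simps)
    then show ?thesis using r21 r22 by simp
  qed
  define p1 where "p1 = a11*w1 + a12*w2"
  define p2 where "p2 = a21*w1 + a22*w2"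
  have zp1: "z1 = l*(b11*p1 + b12*p2)" unfolding z1_def using f1 f2 unfolding p1_def[symmetric] p2_def[symmetric]
    by (simp add: algebra_simps)
  have zp2: "z2 = l*(b21*p1 + b22*p2)" unfolding z2_def using f1 f2 unfolding p1_def[symmetric] p2_def[symmetric]
    by (simp add: algebra_simps)
  have h1: "a11*z1 + a12*z2 = l*z1"
  proof -
    have "a11*z1 + a12*z2 = l*(a11*(b11*p1 + b12*p2) + a12*(b21*p1 + b22*p2))" unfolding zp1 zp2 by (simp add: algebra_simps)
    also have "a11*(b11*p1 + b12*p2) + a12*(b21*p1 + b22*p2) = b11*w1 + b12*w2" using aba1[of w1 w2] unfolding p1_def p2_def .
    finally show ?thesis unfolding z1_def .
  qed
  have h2: "a21*z1 + a22*z2 = l*z2"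
  proof -
    have "a21*z1 + a22*z2 = l*(a21*(b11*p1 + b12*p2) + a22*(b21*p1 + b22*p2))" unfolding zp1 zp2 by (simp add: algebra_simps)
    also have "a21*(b11*p1 + b12*p2) + a22*(b21*p1 + b22*p2) = b21*w1 + b22*w2" using aba2[of w1 w2] unfolding p1_def p2_def .
    finally show ?thesis unfolding z2_def .
  qed
  have "t*(1 - l*l)*w1 = 0"
    using h1 h2 ch1 ch2 f1 f2 e1 e2 by algebra
  moreover have "t*(1 - l*l)*w2 = 0"
    using h1 h2 ch1 ch2 f1 f2 e1 e2 by algebra
  moreover have "w1 \<noteq> 0 \<or> w2 \<noteq> 0" using D by auto
  ultimately have t0: "t = 0" using ll by (auto simp: right_diff_distrib)
  show ?thesis
    apply (rule exI[of _ v1], rule exI[of _ v2], rule exI[of _ w1], rule exI[of _ w2], rule exI[of _ l])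
    using D lnz ll e1 e2 f1 f2 ch1 ch2 t0 unfolding z1_def z2_def w1_def[symmetric] w2_def[symmetric]
    by simp
qed

definition conjm :: "complex^2^2 \<Rightarrow> complex^2^2 \<Rightarrow> pt \<Rightarrow> pt" where
  "conjm P Q p = (P ** fst p ** Q, P ** snd p ** Q)"

lemma mvmul_nth[simp]: "((M::'a::semiring_1^2^2) *v v) $ i = M$i$1 * v$1 + M$i$2 * v$2"
  by (simp add: matrix_vector_mult_def sum_2)

definition vec2 :: "complex \<Rightarrow> complex \<Rightarrow> complex^2" where
  "vec2 a b = (\<chi> i. if i = 1 then a else b)"

lemma vec2_nth[simp]: "vec2 a b $ 1 = a" "vec2 a b $ 2 = b"
  by (simp_all add: vec2_def)

lemma vec_eq2: "(v::'a^2) = w \<longleftrightarrow> v$1 = w$1 \<and> v$2 = w$2"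
  by (auto simp add: vec_eq_iff forall_2)

lemma normal_form:
  assumes "r \<in> RepK2" "irreducible_rep r"
  obtains P Q l where "P ** Q = mat 1" "Q ** P = mat 1" "l \<noteq> 0" "l*l \<noteq> 1"
    "r = conjm P Q (mat2 l 0 0 (1/l), mat2 0 (-1) 1 0)"
proof -
  obtain A B where r: "r = (A, B)" by (cases r)
  have dA: "det A = 1" and dB: "det B = 1" and rel: "A ** B ** A = B" using assms(1) r by (auto simp: RepK2_def)
  have irr: "\<And>v1 v2 l m. v1 \<noteq> 0 \<or> v2 \<noteq> 0 \<Longrightarrow>
        \<not> (A$1$1* v1 + A$1$2* v2 = l* v1 \<and> A$2$1* v1 + A$2$2* v2 = l* v2 \<and> B$1$1* v1 + B$1$2* v2 = m* v1 \<and> B$2$1* v1 + B$2$2* v2 = m* v2)"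
  proof
    fix v1 v2 l m assume nz: "v1 \<noteq> 0 \<or> v2 \<noteq> 0" and
      h: "A$1$1* v1 + A$1$2* v2 = l* v1 \<and> A$2$1* v1 + A$2$2* v2 = l* v2 \<and> B$1$1* v1 + B$1$2* v2 = m* v1 \<and> B$2$1* v1 + B$2$2* v2 = m* v2"
    have "vec2 v1 v2 \<noteq> 0" using nz by (auto simp: vec_eq2)
    moreover have "A *v vec2 v1 v2 = l *s vec2 v1 v2" "B *v vec2 v1 v2 = m *s vec2 v1 v2"
      using h by (auto simp: vec_eq2)
    ultimately show False using assms(2) r unfolding irreducible_rep_def by auto
  qed
  obtain v1 v2 w1 w2 l where D: "v1*w2 - w1* v2 \<noteq> 0" and lnz: "l \<noteq> 0" and ll: "l*l \<noteq> 1"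
    and e1: "A$1$1* v1 + A$1$2* v2 = l* v1" and e2: "A$2$1* v1 + A$2$2* v2 = l* v2"
    and f1: "l*(A$1$1*w1 + A$1$2*w2) = w1" and f2: "l*(A$2$1*w1 + A$2$2*w2) = w2"
    and g1: "B$1$1* v1 + B$1$2* v2 = w1" and g2: "B$2$1* v1 + B$2$2* v2 = w2"
    and h1: "B$1$1*w1 + B$1$2*w2 = -v1" and h2: "B$2$1*w1 + B$2$2*w2 = -v2"
  proof -
    have x1: "A$1$1*A$2$2 - A$1$2*A$2$1 = 1" using dA by (simp add: det_2)
    have x2: "B$1$1*B$2$2 - B$1$2*B$2$1 = 1" using dB by (simp add: det_2)
    have x3: "(A ** B ** A) $ i $ j = B $ i $ j" for i j using rel by simp
    note x3' = x3[of 1 1, simplified] x3[of 1 2, simplified] x3[of 2 1, simplified] x3[of 2 2, simplified]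
    show ?thesis using nf_scalar[OF x1 x2 x3' irr] that by blast
  qed
  define d where "d = v1*w2 - w1* v2"
  define P where "P = mat2 v1 w1 v2 w2"
  define Q where "Q = mat2 (w2/d) (-w1/d) (-v2/d) (v1/d)"
  have dnz: "d \<noteq> 0" using D by (simp add: d_def)
  have PQ: "P ** Q = mat 1" using dnz unfolding P_def Q_def by (simp add: mat_eq2 field_simps; simp add: d_def algebra_simps)
  have QP: "Q ** P = mat 1" using dnz unfolding P_def Q_def by (simp add: mat_eq2 field_simps; simp add: d_def algebra_simps)
  have AP: "A ** P = P ** mat2 l 0 0 (1/l)"
    unfolding P_def using e1 e2 f1 f2 lnz by (simp add: mat_eq2 field_simps)
  have BP: "B ** P = P ** mat2 0 (-1) 1 0"
    unfolding P_def using g1 g2 h1 h2 by (simp add: mat_eq2 field_simps)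
  have "A = P ** mat2 l 0 0 (1/l) ** Q"
    by (metis AP PQ matrix_mul_assoc matrix_mul_rid)
  moreover have "B = P ** mat2 0 (-1) 1 0 ** Q"
    by (metis BP PQ matrix_mul_assoc matrix_mul_rid)
  ultimately show ?thesis using that[OF PQ QP lnz ll] r by (simp add: conjm_def)
qed

lemma sum4: "(\<Sum>j<(4::nat). f j) = f 0 + f 1 + f 2 + f 3"
  by (simp add: numeral_eq_Suc add.assoc)

lemma lt4: "(i::nat) < 4 \<longleftrightarrow> i = 0 \<or> i = 1 \<or> i = 2 \<or> i = 3" by auto

lemma cdim4:
  fixes la lb lc ld :: "pt \<Rightarrow> complex" and va vb vc vd :: pt
  assumes add: "\<And>x y. la (x + y) = la x + la y" "\<And>x y. lb (x + y) = lb x + lb y"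
       "\<And>x y. lc (x + y) = lc x + lc y" "\<And>x y. ld (x + y) = ld x + ld y"
    and sc: "\<And>c x. la (pscale c x) = c * la x" "\<And>c x. lb (pscale c x) = c * lb x"
       "\<And>c x. lc (pscale c x) = c * lc x" "\<And>c x. ld (pscale c x) = c * ld x"
    and d1: "la va = 1" "la vb = 0" "la vc = 0" "la vd = 0"
    and d2: "lb va = 0" "lb vb = 1" "lb vc = 0" "lb vd = 0"
    and d3: "lc va = 0" "lc vb = 0" "lc vc = 1" "lc vd = 0"
    and d4: "ld va = 0" "ld vb = 0" "ld vc = 0" "ld vd = 1"
    and mem: "va \<in> S" "vb \<in> S" "vc \<in> S" "vd \<in> S"
    and rep: "\<And>x. x \<in> S \<Longrightarrow> x = pscale (la x) va + pscale (lb x) vb + pscale (lc x) vc + pscale (ld x) vd"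
  shows "cdim S = 4"
proof (rule cdim_gen[where l = "\<lambda>i. [la,lb,lc,ld] ! i" and v = "\<lambda>j. [va,vb,vc,vd] ! j"])
  fix i :: nat and x y assume "i < 4" then show "([la,lb,lc,ld] ! i) (x + y) = ([la,lb,lc,ld] ! i) x + ([la,lb,lc,ld] ! i) y"
    unfolding lt4 by (elim disjE) (simp_all add: add)
next
  fix i :: nat and c x assume "i < 4" then show "([la,lb,lc,ld] ! i) (pscale c x) = c * ([la,lb,lc,ld] ! i) x"
    unfolding lt4 by (elim disjE) (simp_all add: sc)
next
  fix i j :: nat assume "i < 4" "j < 4"
  then show "([la,lb,lc,ld] ! i) ([va,vb,vc,vd] ! j) = (if i = j then 1 else 0)"
    using d1 d2 d3 d4 unfolding lt4 by auto
next
  fix j :: nat assume "j < 4" then show "[va,vb,vc,vd] ! j \<in> S" using mem unfolding lt4 by auto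
next
  fix x assume "x \<in> S" then show "x = (\<Sum>j<4. pscale (([la,lb,lc,ld] ! j) x) ([va,vb,vc,vd] ! j))"
    using rep unfolding sum4 by simp
qed

lemma cancelQP: "Q ** P = mat 1 \<Longrightarrow> X ** Q ** P = X"
  by (metis matrix_mul_assoc matrix_mul_rid)

lemma conj_inv: "Q ** P = mat 1 \<Longrightarrow> P ** Q = mat 1 \<Longrightarrow> conjm Q P (conjm P Q p) = p"
  by (simp add: conjm_def matrix_mul_assoc cancelQP)

lemma madd_r: fixes A B C :: "complex^2^2" shows "((A::complex^2^2) + B) ** C = A ** C + B ** C" unfolding mat_eq2 by (simp add: algebra_simps)
lemma msub_r: fixes A B C :: "complex^2^2" shows "((A::complex^2^2) - B) ** C = A ** C - B ** C" unfolding mat_eq2 by (simp add: algebra_simps)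
lemma msub_l: fixes A B C :: "complex^2^2" shows "(C::complex^2^2) ** (A - B) = C ** A - C ** B" unfolding mat_eq2 by (simp add: algebra_simps)

lemma conj_add: "conjm P Q (x + y) = conjm P Q x + conjm P Q y"
  by (simp add: conjm_def matrix_add_ldistrib madd_r)

lemma conj_scale: "conjm P Q (pscale c x) = pscale c (conjm P Q x)"
  by (simp add: conjm_def pscale_def mat_eq2 algebra_simps)

lemma det_conj: fixes P Q X :: "complex^2^2" shows "P ** Q = mat 1 \<Longrightarrow> det (P ** X ** Q) = (det X :: complex)"
proof -
  assume "P ** Q = mat 1"
  then have "det P * det Q = 1" by (metis det_I det_mul)
  then show ?thesis by (simp add: det_mul algebra_simps)
qed

lemma dd_det: "dd X x = det (X + x) - det X - det x"
  by (simp add: dd_def det_2 algebra_simps)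

lemma conj_Rep: "P ** Q = mat 1 \<Longrightarrow> Q ** P = mat 1 \<Longrightarrow> p \<in> RepK2 \<Longrightarrow> conjm P Q p \<in> RepK2"
  unfolding RepK2_def conjm_def
  apply (cases p)
  apply (simp add: det_conj)
  apply (simp add: matrix_mul_assoc cancelQP)
  by (metis matrix_mul_assoc)

lemma DF_conj:
  assumes PQ: "P ** Q = mat 1" and QP: "Q ** P = mat 1"
  shows "DF (conjm P Q r) (conjm P Q v) = (fst (DF r v), fst (snd (DF r v)), P ** snd (snd (DF r v)) ** Q)"
proof -
  have dd: "dd (P ** X ** Q) (P ** x ** Q) = dd X x" for X x
    unfolding dd_det using det_conj[OF PQ]
    by (metis matrix_add_ldistrib madd_r)
  show ?thesis
    unfolding DF_def conjm_def
    by (simp add: dd matrix_mul_assoc cancelQP[OF QP] matrix_add_ldistrib madd_r msub_l msub_r)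
qed

definition r0 :: "complex \<Rightarrow> pt" where "r0 l = (mat2 l 0 0 (1/l), mat2 0 (-1) 1 0)"

lemma K0_scalar:
  fixes l a11 a12 a21 a22 b11 b12 b21 b22 :: complex
  assumes l: "l \<noteq> 0" "l*l \<noteq> 1"
    and E1: "l * a22 + a11 / l = 0"
    and E3: "a12 * l + l * b11 * l - l * a21 = b11"
    and E6: "b22 / (l * l) - a21 / l + a12 / l = b22"
  shows "a22 = -a11/(l*l)" "a21 = a12 + (l - 1/l) * b11" "b22 = - b11"
proof -
  have "l*l*a22 + a11 = l*(l*a22 + a11/l)" using l by (simp add: field_simps)
  then have "l*l*a22 + a11 = 0" using E1 by simp
  then show "a22 = -a11/(l*l)" using l by (simp add: field_simps add_eq_0_iff2)
  have "l * a21 = l * (a12 + (l - 1/l) * b11)" using E3 l by (simp add: field_simps)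
  then show a21: "a21 = a12 + (l - 1/l) * b11" using l by simp
  have "l*l*(b22 / (l * l) - a21 / l + a12 / l) = l*l*b22" using E6 by simp
  moreover have "l*l*(b22 / (l * l) - a21 / l + a12 / l) = b22 - l*a21 + l*a12" using l
    by (simp add: field_simps)
  ultimately have E6': "b22 - l*a21 + l*a12 = l*l*b22" by simp
  have "(1 - l*l) * (b11 + b22) = 0" using E3 E6' by (simp add: algebra_simps) algebra
  then show "b22 = - b11" using l by (simp add: add_eq_0_iff2)
qed

lemma K0_eqs:
  assumes l: "l \<noteq> 0" "l*l \<noteq> 1" and D: "DF (r0 l) w = 0"
  shows "fst w $ 2 $ 2 = -(fst w $ 1 $ 1)/(l*l)" "fst w $ 2 $ 1 = fst w $ 1 $ 2 + (l - 1/l) * snd w $ 1 $ 1"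
    "snd w $ 2 $ 1 = snd w $ 1 $ 2" "snd w $ 2 $ 2 = - snd w $ 1 $ 1"
proof -
  have E: "l * fst w$2$2 + fst w$1$1 / l = 0 \<and> snd w$2$1 = snd w$1$2 \<and>
      fst w$1$2 * l + l* snd w$1$1*l - l*fst w$2$1 = snd w$1$1 \<and>
      snd w$2$2/(l*l) - fst w$2$1/l + fst w$1$2/l = snd w$2$2"
    using D unfolding DF_def r0_def dd_def by (simp add: mat_eq2 prod_eq_iff)
  note K = K0_scalar[OF l, of "fst w$2$2" "fst w$1$1" "fst w$1$2" "snd w$1$1" "fst w$2$1" "snd w$2$2"]
  show "fst w $ 2 $ 2 = -(fst w $ 1 $ 1)/(l*l)" using K E by simp
  show "fst w $ 2 $ 1 = fst w $ 1 $ 2 + (l - 1/l) * snd w $ 1 $ 1" using K E by simp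
  show "snd w $ 2 $ 1 = snd w $ 1 $ 2" using E by simp
  show "snd w $ 2 $ 2 = - snd w $ 1 $ 1" using K E by simp
qed


definition "e1 l = ((mat2 1 0 0 (-1/(l*l)), 0) :: pt)"
definition "e2 = ((mat2 0 1 1 0, 0) :: pt)"
definition "e3 l = ((mat2 0 0 (l - 1/l) 0, mat2 1 0 0 (-1)) :: pt)"
definition "e4 = ((0, mat2 0 1 1 0) :: pt)"

lemma e_in_K0:
  assumes "l \<noteq> 0"
  shows "DF (r0 l) (e1 l) = 0" "DF (r0 l) e2 = 0" "DF (r0 l) (e3 l) = 0" "DF (r0 l) e4 = 0"
  using assms unfolding DF_def r0_def dd_def e1_def e2_def e3_def e4_def
  by (simp_all add: mat_eq2 prod_eq_iff field_simps)

lemma K0_rep: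
  assumes l: "l \<noteq> 0" "l*l \<noteq> 1" and D: "DF (r0 l) w = 0"
  shows "w = pscale (fst w$1$1) (e1 l) + pscale (fst w$1$2) e2 + pscale (snd w$1$1) (e3 l) + pscale (snd w$1$2) e4"
  using K0_eqs[OF l D] unfolding e1_def e2_def e3_def e4_def pscale_def
  by (simp add: mat_eq2 prod_eq_iff algebra_simps)

lemma mzero: "P ** (0::complex^2^2) ** Q = 0" by (simp add: mat_eq2)

lemma tangent_dim:
  assumes PQ: "P ** Q = mat 1" and QP: "Q ** P = mat 1" and l: "l \<noteq> 0" "l*l \<noteq> 1"
  shows "cdim {v. DF (conjm P Q (r0 l)) v = 0} = 4"
proof (rule cdim4[where la = "\<lambda>v. fst (conjm Q P v) $1$1" and lb = "\<lambda>v. fst (conjm Q P v) $1$2"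
      and lc = "\<lambda>v. snd (conjm Q P v) $1$1" and ld = "\<lambda>v. snd (conjm Q P v) $1$2"
      and va = "conjm P Q (e1 l)" and vb = "conjm P Q e2" and vc = "conjm P Q (e3 l)" and vd = "conjm P Q e4"])
  let ?K = "{v. DF (conjm P Q (r0 l)) v = 0}"
  show "\<And>x y. fst (conjm Q P (x + y)) $1$1 = fst (conjm Q P x) $1$1 + fst (conjm Q P y) $1$1"
       "\<And>x y. fst (conjm Q P (x + y)) $1$2 = fst (conjm Q P x) $1$2 + fst (conjm Q P y) $1$2"
       "\<And>x y. snd (conjm Q P (x + y)) $1$1 = snd (conjm Q P x) $1$1 + snd (conjm Q P y) $1$1"
       "\<And>x y. snd (conjm Q P (x + y)) $1$2 = snd (conjm Q P x) $1$2 + snd (conjm Q P y) $1$2"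
    by (simp_all add: conj_add)
  show "\<And>c x. fst (conjm Q P (pscale c x)) $1$1 = c * fst (conjm Q P x) $1$1"
       "\<And>c x. fst (conjm Q P (pscale c x)) $1$2 = c * fst (conjm Q P x) $1$2"
       "\<And>c x. snd (conjm Q P (pscale c x)) $1$1 = c * snd (conjm Q P x) $1$1"
       "\<And>c x. snd (conjm Q P (pscale c x)) $1$2 = c * snd (conjm Q P x) $1$2"
    by (simp_all add: conj_scale)
  have ci: "conjm Q P (conjm P Q x) = x" for x by (rule conj_inv[OF QP PQ])
  show "fst (conjm Q P (conjm P Q (e1 l))) $1$1 = 1" "fst (conjm Q P (conjm P Q e2)) $1$1 = 0"
     "fst (conjm Q P (conjm P Q (e3 l))) $1$1 = 0" "fst (conjm Q P (conjm P Q e4)) $1$1 = 0"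
     "fst (conjm Q P (conjm P Q (e1 l))) $1$2 = 0" "fst (conjm Q P (conjm P Q e2)) $1$2 = 1"
     "fst (conjm Q P (conjm P Q (e3 l))) $1$2 = 0" "fst (conjm Q P (conjm P Q e4)) $1$2 = 0"
     "snd (conjm Q P (conjm P Q (e1 l))) $1$1 = 0" "snd (conjm Q P (conjm P Q e2)) $1$1 = 0"
     "snd (conjm Q P (conjm P Q (e3 l))) $1$1 = 1" "snd (conjm Q P (conjm P Q e4)) $1$1 = 0"
     "snd (conjm Q P (conjm P Q (e1 l))) $1$2 = 0" "snd (conjm Q P (conjm P Q e2)) $1$2 = 0"
     "snd (conjm Q P (conjm P Q (e3 l))) $1$2 = 0" "snd (conjm Q P (conjm P Q e4)) $1$2 = 1"
    by (simp_all add: ci e1_def e2_def e3_def e4_def)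
  show "conjm P Q (e1 l) \<in> ?K" "conjm P Q e2 \<in> ?K" "conjm P Q (e3 l) \<in> ?K" "conjm P Q e4 \<in> ?K"
    using e_in_K0[OF l(1)] by (simp_all add: DF_conj[OF PQ QP] mzero zero_prod_def)
  fix x assume "x \<in> ?K"
  define w where "w = conjm Q P x"
  have xw: "x = conjm P Q w" unfolding w_def by (rule conj_inv[OF PQ QP, symmetric])
  have "DF (conjm P Q (r0 l)) (conjm P Q w) = 0" using \<open>x \<in> ?K\<close> xw by simp
  then have "fst (DF (r0 l) w) = 0" "fst (snd (DF (r0 l) w)) = 0" "P ** snd (snd (DF (r0 l) w)) ** Q = 0"
    by (simp_all add: DF_conj[OF PQ QP] zero_prod_def)
  moreover have "snd (snd (DF (r0 l) w)) = Q ** (P ** snd (snd (DF (r0 l) w)) ** Q) ** P"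
    by (simp add: matrix_mul_assoc cancelQP[OF QP]) (metis QP matrix_mul_assoc matrix_mul_lid)
  ultimately have "DF (r0 l) w = 0" by (simp add: prod_eq_iff mzero zero_prod_def)
  from K0_rep[OF l this] have "x = conjm P Q (pscale (fst w$1$1) (e1 l) + pscale (fst w$1$2) e2 + pscale (snd w$1$1) (e3 l) + pscale (snd w$1$2) e4)"
    using xw by simp
  then show "x = pscale (fst (conjm Q P x) $1$1) (conjm P Q (e1 l)) + pscale (fst (conjm Q P x) $1$2) (conjm P Q e2) +
      pscale (snd (conjm Q P x) $1$1) (conjm P Q (e3 l)) + pscale (snd (conjm Q P x) $1$2) (conjm P Q e4)"
    unfolding w_def[symmetric] by (simp add: conj_add conj_scale)
qed

lemma rel_equiv:
  fixes a11 a12 a21 a22 b11 b12 b21 b22 :: complex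
  assumes dA: "a11*a22 - a12*a21 = 1" and ne: "a11 \<noteq> a22"
  shows "((a11*b11 + a12*b21)*a11 + (a11*b12 + a12*b22)*a21 = b11 \<and>
          (a11*b11 + a12*b21)*a12 + (a11*b12 + a12*b22)*a22 = b12 \<and>
          (a21*b11 + a22*b21)*a11 + (a21*b12 + a22*b22)*a21 = b21 \<and>
          (a21*b11 + a22*b21)*a12 + (a21*b12 + a22*b22)*a22 = b22)
     \<longleftrightarrow> (b11 + b22 = 0 \<and> a11*b11 + a12*b21 + a21*b12 + a22*b22 = 0)"
proof -
  define t where "t = b11 + b22"
  define c where "c = (a11*b11 + a12*b21 + a21*b12 + a22*b22) - (a11 + a22)*t"
  define n11 where "n11 = t*a11 + c"
  define n12 where "n12 = t*a12"
  define n21 where "n21 = t*a21"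
  define n22 where "n22 = t*a22 + c"
  have i11: "(a11*b11 + a12*b21)*a11 + (a11*b12 + a12*b22)*a21 - b11 = a11*n11 + a12*n21 + (a11*a22 - a12*a21 - 1)*b11"
    unfolding n11_def n21_def c_def t_def by (simp add: algebra_simps)
  have i12: "(a11*b11 + a12*b21)*a12 + (a11*b12 + a12*b22)*a22 - b12 = a11*n12 + a12*n22 + (a11*a22 - a12*a21 - 1)*b12"
    unfolding n12_def n22_def c_def t_def by (simp add: algebra_simps)
  have i21: "(a21*b11 + a22*b21)*a11 + (a21*b12 + a22*b22)*a21 - b21 = a21*n11 + a22*n21 + (a11*a22 - a12*a21 - 1)*b21"
    unfolding n11_def n21_def c_def t_def by (simp add: algebra_simps)
  have i22: "(a21*b11 + a22*b21)*a12 + (a21*b12 + a22*b22)*a22 - b22 = a21*n12 + a22*n22 + (a11*a22 - a12*a21 - 1)*b22"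
    unfolding n12_def n22_def c_def t_def by (simp add: algebra_simps)
  have inv1: "n = a22*(a11*n + a12*m) - a12*(a21*n + a22*m)" for n m
  proof -
    have "a22*(a11*n + a12*m) - a12*(a21*n + a22*m) = (a11*a22 - a12*a21)*n" by (simp add: algebra_simps)
    then show ?thesis using dA by simp
  qed
  have inv2: "m = a11*(a21*n + a22*m) - a21*(a11*n + a12*m)" for n m
  proof -
    have "a11*(a21*n + a22*m) - a21*(a11*n + a12*m) = (a11*a22 - a12*a21)*m" by (simp add: algebra_simps)
    then show ?thesis using dA by simp
  qed
  show ?thesis
  proof
    assume r: "(a11*b11 + a12*b21)*a11 + (a11*b12 + a12*b22)*a21 = b11 \<and>
          (a11*b11 + a12*b21)*a12 + (a11*b12 + a12*b22)*a22 = b12 \<and>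
          (a21*b11 + a22*b21)*a11 + (a21*b12 + a22*b22)*a21 = b21 \<and>
          (a21*b11 + a22*b21)*a12 + (a21*b12 + a22*b22)*a22 = b22"
    have z1: "a11*n11 + a12*n21 = 0" "a21*n11 + a22*n21 = 0" using i11 i21 r dA by simp_all
    have z2: "a11*n12 + a12*n22 = 0" "a21*n12 + a22*n22 = 0" using i12 i22 r dA by simp_all
    have "n11 = 0" using inv1[where n=n11 and m=n21] unfolding z1 by simp
    moreover have "n21 = 0" using inv2[where n=n11 and m=n21] unfolding z1 by simp
    moreover have "n12 = 0" using inv1[where n=n12 and m=n22] unfolding z2 by simp
    moreover have "n22 = 0" using inv2[where n=n12 and m=n22] unfolding z2 by simp
    ultimately have h1: "c + a11*t = 0" and h2: "c + a22*t = 0" unfolding n11_def n22_def by (simp_all add: algebra_simps)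
    have "t*(a11 - a22) = (c + a11*t) - (c + a22*t)" by (simp add: algebra_simps)
    then have "t*(a11 - a22) = 0" using h1 h2 by simp
    then have t0: "t = 0" using ne by simp
    have "c = (c + a11*t) - t*a11" by simp
    then have "c = 0" using h1 t0 by simp
    note t0 this
    then show "b11 + b22 = 0 \<and> a11*b11 + a12*b21 + a21*b12 + a22*b22 = 0" unfolding t_def c_def by simp
  next
    assume "b11 + b22 = 0 \<and> a11*b11 + a12*b21 + a21*b12 + a22*b22 = 0"
    then have "t = 0" "c = 0" unfolding t_def c_def by simp_all
    then have "n11 = 0" "n12 = 0" "n21 = 0" "n22 = 0" unfolding n11_def n12_def n21_def n22_def by simp_all
    then show "(a11*b11 + a12*b21)*a11 + (a11*b12 + a12*b22)*a21 = b11 \<and>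
          (a11*b11 + a12*b21)*a12 + (a11*b12 + a12*b22)*a22 = b12 \<and>
          (a21*b11 + a22*b21)*a11 + (a21*b12 + a22*b22)*a21 = b21 \<and>
          (a21*b11 + a22*b21)*a12 + (a21*b12 + a22*b22)*a22 = b22"
      using i11 i12 i21 i22 dA by simp
  qed
qed

definition cderiv :: "(pt \<Rightarrow> complex) \<Rightarrow> (pt \<Rightarrow> complex) \<Rightarrow> pt \<Rightarrow> bool" where
  "cderiv f D w \<longleftrightarrow> (f has_derivative D) (at w) \<and> (\<forall>c h. D (pscale c h) = c * D h)"

lemma cd_fst: "\<exists>D. cderiv (\<lambda>x. fst x $ i $ j) D w"
  by (rule exI[of _ "\<lambda>h. fst h $ i $ j"]) (auto simp: cderiv_def intro!: derivative_eq_intros)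

lemma cd_snd: "\<exists>D. cderiv (\<lambda>x. snd x $ i $ j) D w"
  by (rule exI[of _ "\<lambda>h. snd h $ i $ j"]) (auto simp: cderiv_def intro!: derivative_eq_intros)

lemma cd_const: "\<exists>D. cderiv (\<lambda>x. k) D w"
  by (rule exI[of _ "\<lambda>h. 0"]) (auto simp: cderiv_def intro!: derivative_eq_intros)

lemma cd_add: "\<exists>D. cderiv f D w \<Longrightarrow> \<exists>D. cderiv g D w \<Longrightarrow> \<exists>D. cderiv (\<lambda>x. f x + g x) D w"
proof -
  assume "\<exists>D. cderiv f D w" "\<exists>D. cderiv g D w"
  then obtain Df Dg where f: "cderiv f Df w" and g: "cderiv g Dg w" by blast
  have "((\<lambda>x. f x + g x) has_derivative (\<lambda>h. Df h + Dg h)) (at w)"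
    using f g unfolding cderiv_def by (intro has_derivative_add) auto
  moreover have "\<forall>c h. Df (pscale c h) + Dg (pscale c h) = c * (Df h + Dg h)"
    using f g unfolding cderiv_def by (simp add: algebra_simps)
  ultimately show ?thesis unfolding cderiv_def by blast
qed

lemma cd_diff: "\<exists>D. cderiv f D w \<Longrightarrow> \<exists>D. cderiv g D w \<Longrightarrow> \<exists>D. cderiv (\<lambda>x. f x - g x) D w"
proof -
  assume "\<exists>D. cderiv f D w" "\<exists>D. cderiv g D w"
  then obtain Df Dg where f: "cderiv f Df w" and g: "cderiv g Dg w" by blast
  have "((\<lambda>x. f x - g x) has_derivative (\<lambda>h. Df h - Dg h)) (at w)"
    using f g unfolding cderiv_def by (intro has_derivative_diff) auto
  moreover have "\<forall>c h. Df (pscale c h) - Dg (pscale c h) = c * (Df h - Dg h)"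
    using f g unfolding cderiv_def by (simp add: algebra_simps)
  ultimately show ?thesis unfolding cderiv_def by blast
qed

lemma cd_minus: "\<exists>D. cderiv f D w \<Longrightarrow> \<exists>D. cderiv (\<lambda>x. - f x) D w"
proof -
  assume "\<exists>D. cderiv f D w"
  then obtain Df where f: "cderiv f Df w" by blast
  have "((\<lambda>x. - f x) has_derivative (\<lambda>h. - Df h)) (at w)"
    using f unfolding cderiv_def by (intro has_derivative_minus) auto
  moreover have "\<forall>c h. - Df (pscale c h) = c * (- Df h)"
    using f unfolding cderiv_def by (simp add: algebra_simps)
  ultimately show ?thesis unfolding cderiv_def by blast
qed

lemma cd_mult: "\<exists>D. cderiv f D w \<Longrightarrow> \<exists>D. cderiv g D w \<Longrightarrow> \<exists>D. cderiv (\<lambda>x. f x * g x) D w"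
proof -
  assume "\<exists>D. cderiv f D w" "\<exists>D. cderiv g D w"
  then obtain Df Dg where f: "cderiv f Df w" and g: "cderiv g Dg w" by blast
  have "((\<lambda>x. f x * g x) has_derivative (\<lambda>h. f w * Dg h + Df h * g w)) (at w)"
    using f g unfolding cderiv_def by (intro has_derivative_mult) auto
  moreover have "\<forall>c h. f w * Dg (pscale c h) + Df (pscale c h) * g w = c * (f w * Dg h + Df h * g w)"
    using f g unfolding cderiv_def by (simp add: algebra_simps)
  ultimately show ?thesis unfolding cderiv_def by blast
qed

lemma cd_divide: "\<exists>D. cderiv f D w \<Longrightarrow> \<exists>D. cderiv g D w \<Longrightarrow> g w \<noteq> 0 \<Longrightarrow> \<exists>D. cderiv (\<lambda>x. f x / g x) D w"
proof -
  assume "\<exists>D. cderiv f D w" "\<exists>D. cderiv g D w" and gnz: "g w \<noteq> 0"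
  then obtain Df Dg where f: "cderiv f Df w" and g: "cderiv g Dg w" by blast
  have "((\<lambda>x. f x / g x) has_derivative (\<lambda>h. - f w * (inverse (g w) * Dg h * inverse (g w)) + Df h / g w)) (at w)"
    using f g gnz unfolding cderiv_def by (intro has_derivative_divide) auto
  moreover have "\<forall>c h. - f w * (inverse (g w) * Dg (pscale c h) * inverse (g w)) + Df (pscale c h) / g w
     = c * (- f w * (inverse (g w) * Dg h * inverse (g w)) + Df h / g w)"
    using f g unfolding cderiv_def by (simp add: algebra_simps)
  ultimately show ?thesis unfolding cderiv_def by blast
qed

definition "b21f w = -(1 + snd w$1$1 * snd w$1$1) / snd w$1$2"
definition "Rf w = -(fst w$1$1 * snd w$1$1 + fst w$1$2 * b21f w)"
definition "Mf w = fst w$1$1 * snd w$1$2 - fst w$1$2 * snd w$1$1"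
definition "a21f w = (snd w$1$1 + fst w$1$1 * Rf w) / Mf w"
definition "a22f w = (fst w$1$2 * Rf w + snd w$1$2) / Mf w"
definition phi0 :: "pt \<Rightarrow> pt" where
  "phi0 w = (mat2 (fst w$1$1) (fst w$1$2) (a21f w) (a22f w), mat2 (snd w$1$1) (snd w$1$2) (b21f w) (- snd w$1$1))"
definition psi0 :: "pt \<Rightarrow> pt" where
  "psi0 p = (mat2 (fst p$1$1) (fst p$1$2) 0 0, mat2 (snd p$1$1) (snd p$1$2) 0 0)"
definition "W0 = {p::pt. fst p$2$1 = 0 \<and> fst p$2$2 = 0 \<and> snd p$2$1 = 0 \<and> snd p$2$2 = 0}"
definition "O0 = {w::pt. snd w$1$2 \<noteq> 0} \<inter> {w. Mf w \<noteq> 0}"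
definition "U0 = {p::pt. fst p$1$1 \<noteq> fst p$2$2} \<inter> O0"
definition "V0 = W0 \<inter> (O0 \<inter> phi0 -` U0)"

lemma rel_scalar: "(A::complex^2^2) ** B ** A = B \<longleftrightarrow>
   ((A$1$1*B$1$1 + A$1$2*B$2$1)*A$1$1 + (A$1$1*B$1$2 + A$1$2*B$2$2)*A$2$1 = B$1$1 \<and>
    (A$1$1*B$1$1 + A$1$2*B$2$1)*A$1$2 + (A$1$1*B$1$2 + A$1$2*B$2$2)*A$2$2 = B$1$2 \<and>
    (A$2$1*B$1$1 + A$2$2*B$2$1)*A$1$1 + (A$2$1*B$1$2 + A$2$2*B$2$2)*A$2$1 = B$2$1 \<and>
    (A$2$1*B$1$1 + A$2$2*B$2$1)*A$1$2 + (A$2$1*B$1$2 + A$2$2*B$2$2)*A$2$2 = B$2$2)"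
  unfolding mat_eq2 by simp

lemma RepK2_U0:
  assumes "fst p$1$1 \<noteq> fst p$2$2"
  shows "p \<in> RepK2 \<longleftrightarrow> det (fst p) = 1 \<and> det (snd p) = 1 \<and> snd p$1$1 + snd p$2$2 = 0 \<and>
     fst p$1$1 * snd p$1$1 + fst p$1$2 * snd p$2$1 + fst p$2$1 * snd p$1$2 + fst p$2$2 * snd p$2$2 = 0"
proof -
  obtain A B where p: "p = (A, B)" by (cases p)
  show ?thesis
  proof (cases "det A = 1")
    case True
    then have dA: "A$1$1*A$2$2 - A$1$2*A$2$1 = 1" by (simp add: det_2)
    show ?thesis using rel_equiv[OF dA] assms True unfolding p RepK2_def by (auto simp: rel_scalar)
  next
    case False then show ?thesis unfolding p RepK2_def by auto
  qed
qed

lemma phi0_eqs: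
  assumes "w \<in> O0"
  shows "det (fst (phi0 w)) = 1" "det (snd (phi0 w)) = 1" "snd (phi0 w)$1$1 + snd (phi0 w)$2$2 = 0"
    "fst (phi0 w)$1$1 * snd (phi0 w)$1$1 + fst (phi0 w)$1$2 * snd (phi0 w)$2$1 + fst (phi0 w)$2$1 * snd (phi0 w)$1$2 + fst (phi0 w)$2$2 * snd (phi0 w)$2$2 = 0"
proof -
  have c4: "snd w$1$2 \<noteq> 0" and m: "Mf w \<noteq> 0" using assms by (auto simp: O0_def)
  have m': "fst w$1$1 * snd w$1$2 - fst w$1$2 * snd w$1$1 \<noteq> 0" using m by (simp add: Mf_def)
  show "det (fst (phi0 w)) = 1"
    using m unfolding phi0_def det_2 a21f_def a22f_def by (simp add: field_simps) (simp add: Mf_def algebra_simps)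
  show "det (snd (phi0 w)) = 1"
    using c4 unfolding phi0_def det_2 b21f_def by (simp add: field_simps)
  show "snd (phi0 w)$1$1 + snd (phi0 w)$2$2 = 0" unfolding phi0_def by simp
  show "fst (phi0 w)$1$1 * snd (phi0 w)$1$1 + fst (phi0 w)$1$2 * snd (phi0 w)$2$1 + fst (phi0 w)$2$1 * snd (phi0 w)$1$2 + fst (phi0 w)$2$2 * snd (phi0 w)$2$2 = 0"
    using m unfolding phi0_def a21f_def a22f_def Rf_def by (simp add: field_simps) (simp add: Mf_def algebra_simps)
qed


lemma uniq_scalar:
  fixes a11 a12 a21 a22 b11 b12 b21 b22 :: complex
  assumes dA: "a11*a22 - a12*a21 = 1" and dB: "b11*b22 - b12*b21 = 1" and tB: "b11 + b22 = 0"
    and tr: "a11*b11 + a12*b21 + a21*b12 + a22*b22 = 0" and b12: "b12 \<noteq> 0" and M: "a11*b12 - a12*b11 \<noteq> 0"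
  shows "b21 = -(1 + b11*b11)/b12"
    "a21 = (b11 + a11 * (-(a11*b11 + a12*b21))) / (a11*b12 - a12*b11)"
    "a22 = (a12 * (-(a11*b11 + a12*b21)) + b12) / (a11*b12 - a12*b11)"
proof -
  have b22: "b22 = - b11" using tB by (simp add: eq_neg_iff_add_eq_0 add.commute)
  have "b12*b21 = -(1 + b11*b11)" using dB unfolding b22 by (simp add: algebra_simps)
  then show "b21 = -(1 + b11*b11)/b12" using b12 by (simp add: eq_divide_eq mult.commute)
  have e1: "a21*(a11*b12 - a12*b11) - (b11 + a11 * (-(a11*b11 + a12*b21))) =
      a11*(a11*b11 + a12*b21 + a21*b12 + a22*b22) + b11*((a11*a22 - a12*a21) - 1)"
    unfolding b22 by (simp add: algebra_simps)
  have "a21*(a11*b12 - a12*b11) = b11 + a11 * (-(a11*b11 + a12*b21))" using e1 unfolding tr dA by simp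
  then show "a21 = (b11 + a11 * (-(a11*b11 + a12*b21))) / (a11*b12 - a12*b11)" using M by (simp add: eq_divide_eq)
  have e2: "a22*(a11*b12 - a12*b11) - (a12 * (-(a11*b11 + a12*b21)) + b12) =
      a12*(a11*b11 + a12*b21 + a21*b12 + a22*b22) + b12*((a11*a22 - a12*a21) - 1)"
    unfolding b22 by (simp add: algebra_simps)
  have "a22*(a11*b12 - a12*b11) = a12 * (-(a11*b11 + a12*b21)) + b12" using e2 unfolding tr dA by simp
  then show "a22 = (a12 * (-(a11*b11 + a12*b21)) + b12) / (a11*b12 - a12*b11)" using M by (simp add: eq_divide_eq)
qed

lemma phi0_psi0:
  assumes "p \<in> RepK2" "p \<in> U0"
  shows "phi0 (psi0 p) = p"
proof -
  have ne: "fst p$1$1 \<noteq> fst p$2$2" and c4: "snd p$1$2 \<noteq> 0" and m: "Mf p \<noteq> 0" using assms(2) by (auto simp: U0_def O0_def)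
  have E: "det (fst p) = 1 \<and> det (snd p) = 1 \<and> snd p$1$1 + snd p$2$2 = 0 \<and>
     fst p$1$1 * snd p$1$1 + fst p$1$2 * snd p$2$1 + fst p$2$1 * snd p$1$2 + fst p$2$2 * snd p$2$2 = 0"
    using RepK2_U0[OF ne] assms(1) by blast
  have dA: "fst p$1$1 * fst p$2$2 - fst p$1$2 * fst p$2$1 = 1" using E by (simp add: det_2)
  have dB: "snd p$1$1 * snd p$2$2 - snd p$1$2 * snd p$2$1 = 1" using E by (simp add: det_2)
  have t: "snd p$1$1 + snd p$2$2 = 0" using E by blast
  have tr: "fst p$1$1 * snd p$1$1 + fst p$1$2 * snd p$2$1 + fst p$2$1 * snd p$1$2 + fst p$2$2 * snd p$2$2 = 0" using E by blast
  have m': "fst p$1$1 * snd p$1$2 - fst p$1$2 * snd p$1$1 \<noteq> 0" using m by (simp add: Mf_def)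
  note U = uniq_scalar[OF dA dB t tr c4 m']
  have b22: "snd p$2$2 = - snd p$1$1" using t by (simp add: eq_neg_iff_add_eq_0 add.commute)
  have psi: "fst (psi0 p)$1$1 = fst p$1$1" "fst (psi0 p)$1$2 = fst p$1$2" "snd (psi0 p)$1$1 = snd p$1$1" "snd (psi0 p)$1$2 = snd p$1$2"
    by (simp_all add: psi0_def)
  have hb: "b21f (psi0 p) = snd p$2$1" unfolding b21f_def psi using U(1) by simp
  have hR: "Rf (psi0 p) = -(fst p$1$1 * snd p$1$1 + fst p$1$2 * snd p$2$1)" unfolding Rf_def psi hb ..
  have hM: "Mf (psi0 p) = fst p$1$1 * snd p$1$2 - fst p$1$2 * snd p$1$1" unfolding Mf_def psi ..
  have ha21: "a21f (psi0 p) = fst p$2$1" unfolding a21f_def hR hM psi using U(2) by simp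
  have ha22: "a22f (psi0 p) = fst p$2$2" unfolding a22f_def hR hM psi using U(3) by simp
  show ?thesis
    unfolding phi0_def ha21 ha22 hb psi prod_eq_iff mat_eq2 using b22 by simp
qed

lemma psi0_phi0: "w \<in> W0 \<Longrightarrow> psi0 (phi0 w) = w"
  unfolding W0_def phi0_def psi0_def by (simp add: prod_eq_iff mat_eq2)

lemma psi0_V0:
  assumes "p \<in> RepK2" "p \<in> U0"
  shows "psi0 p \<in> V0"
proof -
  have "psi0 p \<in> W0" unfolding W0_def psi0_def by simp
  moreover have "psi0 p \<in> O0" using assms(2) unfolding U0_def O0_def psi0_def Mf_def by simp
  moreover have "phi0 (psi0 p) \<in> U0" using phi0_psi0[OF assms] assms(2) by simp
  ultimately show ?thesis unfolding V0_def by simp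
qed

lemma phi0_V0:
  assumes "w \<in> V0"
  shows "phi0 w \<in> RepK2 \<inter> U0"
proof -
  have O: "w \<in> O0" and U: "phi0 w \<in> U0" using assms by (auto simp: V0_def)
  then have ne: "fst (phi0 w)$1$1 \<noteq> fst (phi0 w)$2$2" by (simp add: U0_def)
  show ?thesis using RepK2_U0[OF ne] phi0_eqs[OF O] U by simp
qed

lemma cont_b21f: "continuous_on O0 b21f"
  unfolding b21f_def by (intro continuous_intros) (simp add: O0_def)

lemma cont_Rf: "continuous_on O0 Rf"
  unfolding Rf_def by (intro continuous_intros cont_b21f)

lemma cont_Mf: "continuous_on O0 Mf"
  unfolding Mf_def by (intro continuous_intros)

lemma cont_a21f: "continuous_on O0 a21f"
  unfolding a21f_def by (intro continuous_intros cont_Rf cont_Mf) (simp add: O0_def)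

lemma cont_a22f: "continuous_on O0 a22f"
  unfolding a22f_def by (intro continuous_intros cont_Rf cont_Mf) (simp add: O0_def)

lemma cont_phi0: "continuous_on O0 phi0"
  unfolding phi0_def by (intro continuous_intros cont_a21f cont_a22f cont_b21f)

lemma cont_psi0: "continuous_on S psi0"
  unfolding psi0_def by (intro continuous_intros)

lemma homeo0: "homeomorphism V0 (RepK2 \<inter> U0) phi0 psi0"
proof (rule homeomorphismI)
  show "continuous_on V0 phi0" by (rule continuous_on_subset[OF cont_phi0]) (auto simp: V0_def)
  show "continuous_on (RepK2 \<inter> U0) psi0" by (rule cont_psi0)
  show "phi0 ` V0 \<subseteq> RepK2 \<inter> U0" using phi0_V0 by auto
  show "psi0 ` (RepK2 \<inter> U0) \<subseteq> V0" using psi0_V0 by auto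
  show "\<And>x. x \<in> V0 \<Longrightarrow> psi0 (phi0 x) = x" using psi0_phi0 by (auto simp: V0_def)
  show "\<And>y. y \<in> RepK2 \<inter> U0 \<Longrightarrow> phi0 (psi0 y) = y" using phi0_psi0 by auto
qed

lemma hd_fst: "((\<lambda>x::pt. fst x $ i $ j) has_derivative (\<lambda>h. fst h $ i $ j)) (at w)"
  by (auto intro!: derivative_eq_intros)
lemma hd_snd: "((\<lambda>x::pt. snd x $ i $ j) has_derivative (\<lambda>h. snd h $ i $ j)) (at w)"
  by (auto intro!: derivative_eq_intros)

lemma phi0_deriv:
  assumes w: "w \<in> O0"
  shows "\<exists>D. (phi0 has_derivative D) (at w) \<and> inj_on D W0 \<and> (\<forall>c h. D (pscale c h) = pscale c (D h))"
proof -
  have c4: "snd w$1$2 \<noteq> 0" and m: "Mf w \<noteq> 0" using w by (auto simp: O0_def)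
  have b: "\<exists>D. cderiv b21f D w" unfolding b21f_def
    by (intro cd_divide cd_minus cd_add cd_mult cd_const cd_snd c4)
  have R: "\<exists>D. cderiv Rf D w" unfolding Rf_def
    by (intro cd_minus cd_add cd_mult cd_fst cd_snd b)
  have M: "\<exists>D. cderiv Mf D w" unfolding Mf_def
    by (intro cd_diff cd_mult cd_fst cd_snd)
  have a1: "\<exists>D. cderiv a21f D w" unfolding a21f_def
    by (intro cd_divide cd_add cd_mult cd_fst cd_snd R M m)
  have a2: "\<exists>D. cderiv a22f D w" unfolding a22f_def
    by (intro cd_divide cd_add cd_mult cd_fst cd_snd R M m)
  obtain Da Db Dc where Da: "cderiv a21f Da w" and Db: "cderiv a22f Db w" and Dc: "cderiv b21f Dc w"
    using a1 a2 b by blast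
  define D where "D h = (mat2 (fst h$1$1) (fst h$1$2) (Da h) (Db h), mat2 (snd h$1$1) (snd h$1$2) (Dc h) (- snd h$1$1))" for h
  have "(phi0 has_derivative D) (at w)"
  proof -
    have "((\<lambda>w. (mat2 (fst w$1$1) (fst w$1$2) (a21f w) (a22f w), mat2 (snd w$1$1) (snd w$1$2) (b21f w) (- snd w$1$1)))
      has_derivative (\<lambda>h. (mat2 (fst h$1$1) (fst h$1$2) (Da h) (Db h), mat2 (snd h$1$1) (snd h$1$2) (Dc h) (- snd h$1$1)))) (at w)"
      using Da Db Dc unfolding cderiv_def
      by (intro has_derivative_Pair has_derivative_mat2 has_derivative_minus hd_fst hd_snd) auto
    then show ?thesis unfolding D_def[abs_def] phi0_def[abs_def] .
  qed
  moreover have "inj_on D W0"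
    by (rule inj_onI) (auto simp: W0_def D_def prod_eq_iff mat_eq2)
  moreover have "\<forall>c h. D (pscale c h) = pscale c (D h)"
    using Da Db Dc unfolding cderiv_def D_def by (simp add: pscale_def mat_eq2 prod_eq_iff)
  ultimately show ?thesis by blast
qed

lemma bl_conj: "bounded_linear (conjm P Q)"
proof -
  have "linear (conjm P Q)"
  proof (rule linearI)
    show "conjm P Q (x + y) = conjm P Q x + conjm P Q y" for x y by (rule conj_add)
    show "conjm P Q (r *\<^sub>R x) = r *\<^sub>R conjm P Q x" for r x
      by (simp add: conjm_def prod_eq_iff mat_eq2 algebra_simps)
  qed
  then show ?thesis by (simp add: linear_conv_bounded_linear)
qed

lemma cont_conj: "continuous_on S (conjm P Q)"
  using bounded_linear.continuous_on[OF bl_conj continuous_on_id] by simp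

lemma W0_csub: "csubspace W0"
  unfolding csubspace_def subspace_def W0_def by (auto simp: mat_eq2)

lemma W0_dim: "cdim W0 = 4"
proof (rule cdim4[where la = "\<lambda>v. fst v $1$1" and lb = "\<lambda>v. fst v $1$2"
      and lc = "\<lambda>v. snd v $1$1" and ld = "\<lambda>v. snd v $1$2"
      and va = "(mat2 1 0 0 0, 0)" and vb = "(mat2 0 1 0 0, 0)" and vc = "(0, mat2 1 0 0 0)" and vd = "(0, mat2 0 1 0 0)"])
  fix x assume "x \<in> W0"
  then show "x = pscale (fst x $1$1) (mat2 1 0 0 0, 0) + pscale (fst x $1$2) (mat2 0 1 0 0, 0) +
      pscale (snd x $1$1) (0, mat2 1 0 0 0) + pscale (snd x $1$2) (0, mat2 0 1 0 0)"
    by (simp add: W0_def prod_eq_iff mat_eq2 pscale_def)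
qed (simp_all add: W0_def)

lemma open_O0: "open O0"
  unfolding O0_def Mf_def
  by (intro open_Int open_Collect_neq continuous_intros)

lemma open_U0: "open U0"
  unfolding U0_def
  by (intro open_Int open_Collect_neq continuous_intros open_O0)

lemma openin_V0: "openin (top_of_set W0) V0"
proof -
  have "open (O0 \<inter> phi0 -` U0)" by (rule continuous_open_preimage[OF cont_phi0 open_O0 open_U0])
  then show ?thesis unfolding V0_def by (rule openin_open_Int)
qed

lemma chart:
  assumes PQ: "P ** Q = mat 1" and QP: "Q ** P = mat 1" and l: "l \<noteq> 0" "l*l \<noteq> 1"
  shows "complex_manifold_at RepK2 (conjm P Q (r0 l)) 4"
proof -
  define U where "U = conjm Q P -` U0"
  have openU: "open U"
    using continuous_open_preimage[OF cont_conj[of UNIV Q P] open_UNIV open_U0] by (simp add: U_def)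
  have r0U0: "r0 l \<in> U0"
  proof -
    have "l \<noteq> 1/l" using l by (auto simp: field_simps)
    then show ?thesis using l unfolding U0_def O0_def Mf_def r0_def by simp
  qed
  have inU: "conjm P Q (r0 l) \<in> U" unfolding U_def using r0U0 conj_inv[OF QP PQ] by simp
  have hc: "homeomorphism (RepK2 \<inter> U0) (RepK2 \<inter> U) (conjm P Q) (conjm Q P)"
  proof (rule homeomorphismI)
    show "continuous_on (RepK2 \<inter> U0) (conjm P Q)" by (rule cont_conj)
    show "continuous_on (RepK2 \<inter> U) (conjm Q P)" by (rule cont_conj)
    show "conjm P Q ` (RepK2 \<inter> U0) \<subseteq> RepK2 \<inter> U"
      using conj_Rep[OF PQ QP] conj_inv[OF QP PQ] by (auto simp: U_def)
    show "conjm Q P ` (RepK2 \<inter> U) \<subseteq> RepK2 \<inter> U0"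
      using conj_Rep[OF QP PQ] unfolding U_def by blast
    show "\<And>x. x \<in> RepK2 \<inter> U0 \<Longrightarrow> conjm Q P (conjm P Q x) = x" using conj_inv[OF QP PQ] by simp
    show "\<And>y. y \<in> RepK2 \<inter> U \<Longrightarrow> conjm P Q (conjm Q P y) = y" using conj_inv[OF PQ QP] by simp
  qed
  have homeo: "homeomorphism V0 (RepK2 \<inter> U) (conjm P Q \<circ> phi0) (psi0 \<circ> conjm Q P)"
    by (rule homeomorphism_compose[OF homeo0 hc])
  have injc: "inj (conjm P Q)" by (rule inj_on_inverseI[where g = "conjm Q P"]) (simp add: conj_inv[OF QP PQ])
  have der: "\<exists>D. ((conjm P Q \<circ> phi0) has_derivative D) (at v within W0) \<and> inj_on D W0 \<and>
      (\<forall>c w. w \<in> W0 \<longrightarrow> D (pscale c w) = pscale c (D w))" if "v \<in> V0" for v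
  proof -
    have "v \<in> O0" using that by (simp add: V0_def)
    then obtain D where hD: "(phi0 has_derivative D) (at v)" and iD: "inj_on D W0"
      and sD: "\<forall>c h. D (pscale c h) = pscale c (D h)" using phi0_deriv by blast
    have "((\<lambda>x. conjm P Q (phi0 x)) has_derivative (\<lambda>h. conjm P Q (D h))) (at v)"
      by (rule bounded_linear.has_derivative[OF bl_conj hD])
    then have "((conjm P Q \<circ> phi0) has_derivative (conjm P Q \<circ> D)) (at v within W0)"
      unfolding o_def by (rule has_derivative_at_withinI)
    moreover have "inj_on (conjm P Q \<circ> D) W0"
      using comp_inj_on[OF iD] injc by (meson inj_on_subset subset_UNIV)
    moreover have "\<forall>c w. w \<in> W0 \<longrightarrow> (conjm P Q \<circ> D) (pscale c w) = pscale c ((conjm P Q \<circ> D) w)"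
      using sD by (simp add: conj_scale)
    ultimately show ?thesis by blast
  qed
  show ?thesis
    unfolding complex_manifold_at_def
    using W0_csub W0_dim openU inU openin_V0 homeo der by blast
qed

theorem lemma4p3:
  fixes \<rho> :: pt
  assumes "\<rho> \<in> RepK2" and "irreducible_rep \<rho>"
  shows "smooth_point_K2 \<rho> \<and> cdim (zariski_tangent \<rho>) = 4"
proof -
  obtain P Q l where PQ: "P ** Q = mat 1" and QP: "Q ** P = mat 1" and l: "l \<noteq> 0" "l*l \<noteq> 1"
    and r: "\<rho> = conjm P Q (mat2 l 0 0 (1/l), mat2 0 (-1) 1 0)"
    using normal_form[OF assms] by blast
  have r': "\<rho> = conjm P Q (r0 l)" using r by (simp add: r0_def)
  have dim: "cdim (zariski_tangent \<rho>) = 4"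
    unfolding zariski_eq r' by (rule tangent_dim[OF PQ QP l])
  have "complex_manifold_at RepK2 \<rho> 4" unfolding r' by (rule chart[OF PQ QP l])
  then show ?thesis using dim assms(1) unfolding smooth_point_K2_def by blast
qed

end
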